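(* Let $P\in W^{(l)}\setminus\{0\}$ and let $(\rho_1,\sigma_1)>(\rho_2,\sigma_2)$ be consecutive elements of $\overline{\mathrm{Val}}(P)$ (no element of $\overline{\mathrm{Val}}(P)$ lies strictly between them). Let $(\rho,\sigma)\in\mathfrak V$. (1) If $(\rho_1,\sigma_1)\in\mathrm{Val}(P)$ and $(\rho_1,\sigma_1)>(\rho,\sigma)\ge(\rho_2,\sigma_2)$, then $\mathrm{Succ}_{\rho,\sigma}(P)$ is defined and equals $(\rho_1,\sigma_1)$. (2) If $(\rho_2,\sigma_2)\in\mathrm{Val}(P)$ and $(\rho_1,\sigma_1)\ge(\rho,\sigma)>(\rho_2,\sigma_2)$, then $\mathrm{Pred}_{\rho,\sigma}(P)$ is defined and equals $(\rho_2,\sigma_2)$. (3) If $(\rho_1,\sigma_1)>(\rho,\sigma)>(\rho_2,\sigma_2)$, then $\{\mathrm{st}_{\rho_1,\sigma_1}(P)\}=\mathrm{Supp}(\ell_{\rho,\sigma}(P))=\{\mathrm{en}_{\rho_2,\sigma_2}(P)\}$.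
   Context: $K$ is a field of characteristic zero, $l\in\mathbb{N}$. $W^{(l)}$ is the associative $K$-algebra with $K$-basis $\{X^{i/l}Y^j:i\in\mathbb{Z},j\in\mathbb{N}_0\}$, powers of $X$ multiplying as Laurent monomials and $[Y,X^\alpha]=\alpha X^{\alpha-1}$. $\Psi^{(l)}(X^{i/l}Y^j)=x^{i/l}y^j\in K[x^{\pm1/l},y]$; supports are sets of exponents with nonzero coefficient. $\overline{\mathfrak V}=\{(\rho,\sigma)\in\mathbb{Z}^2:\gcd(\rho,\sigma)=1,\rho+\sigma\ge0\}$, $\mathfrak V$ the subset with $\rho+\sigma>0$; $v_{\rho,\sigma}(a,b)=\rho a+\sigma b$. For $P\ne0$: $v_{\rho,\sigma}(P)=\max_{\mathrm{Supp}(P)}v_{\rho,\sigma}$; $\ell_{\rho,\sigma}(P)$ = sum of terms of $\Psi^{(l)}(P)$ attaining it. $\mathrm{st}_{\rho,\sigma}(P)$: among points $(a,b)\in\mathrm{Supp}(\ell_{\rho,\sigma}(P))$ maximizing $a-b$, the one with largest $a$; $\mathrm{en}_{\rho,\sigma}(P)$: among those maximizing $b-a$, the one with largest $b$. $\mathrm{Val}(P)=\{(\rho,\sigma)\in\mathfrak V:\#\mathrm{Supp}(\ell_{\rho,\sigma}(P))>1\}$, $\overline{\mathrm{Val}}(P)=\mathrm{Val}(P)\cup\{(1,-1),(-1,1)\}$. Total order on $\overline{\mathfrak V}$: $(1,-1)<(\rho,\sigma)<(-1,1)$ for $(\rho,\sigma)\in\mathfrak V$, and on $\mathfrak V$, $(\rho_1,\sigma_1)\le(\rho,\sigma)$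 iff $\rho_1\sigma-\sigma_1\rho\ge0$. For $(c,d)\in\frac1l\mathbb{Z}\times\mathbb{Z}$ not a multiple of $(1,1)$, $\mathrm{val}(c,d)$ is the unique $(\rho',\sigma')\in\mathfrak V$ with $\rho'c+\sigma'd=0$. For $(\rho,\sigma)\in\mathfrak V$ put $\mathrm{en}=\mathrm{en}_{\rho,\sigma}(P)$, $\mathrm{st}=\mathrm{st}_{\rho,\sigma}(P)$, $\mathrm{Valsup}=\{\mathrm{val}((a,b)-\mathrm{en}):(a,b)\in\mathrm{Supp}(P),\ v_{-1,1}(a,b)>v_{-1,1}(\mathrm{en})\}$, $\mathrm{Valinf}=\{\mathrm{val}((a,b)-\mathrm{st}):(a,b)\in\mathrm{Supp}(P),\ v_{1,-1}(a,b)>v_{1,-1}(\mathrm{st})\}$; $\mathrm{Succ}_{\rho,\sigma}(P):=\min\mathrm{Valsup}$ (defined when $\mathrm{Valsup}\ne\emptyset$) and $\mathrm{Pred}_{\rho,\sigma}(P):=\max\mathrm{Valinf}$ (defined when $\mathrm{Valinf}\ne\emptyset$). *)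

theory Defs
  imports Main "HOL.Rat"
begin

(* An element P of W^(l) is represented by its coefficient function:
   P (a, j) is the coefficient of the basis monomial X^a Y^j, where a \<in> (1/l)Z.
   Hence Psi^(l)(P) has the same coefficient function (x^a y^j). *)

definition in_W :: "nat \<Rightarrow> (rat \<times> nat \<Rightarrow> 'k::field_char_0) \<Rightarrow> bool" where
  "in_W l P \<longleftrightarrow> finite {e. P e \<noteq> 0} \<and>
     (\<forall>a j. P (a, j) \<noteq> 0 \<longrightarrow> (\<exists>i::int. a = of_int i / of_nat l))"

definition Supp :: "(rat \<times> nat \<Rightarrow> 'k::zero) \<Rightarrow> (rat \<times> rat) set" where
  "Supp P = {(a, of_nat j) | a j. P (a, j) \<noteq> 0}"

type_synonym dir = "int \<times> int"

definition Vbar :: "dir set" where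
  "Vbar = {(r, s). gcd r s = 1 \<and> r + s \<ge> 0}"

definition V :: "dir set" where
  "V = {(r, s). gcd r s = 1 \<and> r + s > 0}"

definition vval :: "dir \<Rightarrow> rat \<times> rat \<Rightarrow> rat" where
  "vval d p = of_int (fst d) * fst p + of_int (snd d) * snd p"

definition vP :: "dir \<Rightarrow> (rat \<times> nat \<Rightarrow> 'k::zero) \<Rightarrow> rat" where
  "vP d P = Max (vval d ` Supp P)"

(* Supp(ell_{rho,sigma}(P)) : the points of Supp(P) attaining v_{rho,sigma}(P) *)
definition lSupp :: "dir \<Rightarrow> (rat \<times> nat \<Rightarrow> 'k::zero) \<Rightarrow> (rat \<times> rat) set" where
  "lSupp d P = {p \<in> Supp P. vval d p = vP d P}"

definition st :: "dir \<Rightarrow> (rat \<times> nat \<Rightarrow> 'k::zero) \<Rightarrow> rat \<times> rat" where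
  "st d P = (THE p. p \<in> lSupp d P \<and>
     (\<forall>q \<in> lSupp d P. fst q - snd q \<le> fst p - snd p \<and>
        (fst q - snd q = fst p - snd p \<longrightarrow> fst q \<le> fst p)))"

definition en :: "dir \<Rightarrow> (rat \<times> nat \<Rightarrow> 'k::zero) \<Rightarrow> rat \<times> rat" where
  "en d P = (THE p. p \<in> lSupp d P \<and>
     (\<forall>q \<in> lSupp d P. snd q - fst q \<le> snd p - fst p \<and>
        (snd q - fst q = snd p - fst p \<longrightarrow> snd q \<le> snd p)))"

definition Val :: "(rat \<times> nat \<Rightarrow> 'k::zero) \<Rightarrow> dir set" where
  "Val P = {d \<in> V. card (lSupp d P) > 1}"

definition Valbar :: "(rat \<times> nat \<Rightarrow> 'k::zero) \<Rightarrow> dir set" where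
  "Valbar P = Val P \<union> {(1, -1), (-1, 1)}"

definition dir_le :: "dir \<Rightarrow> dir \<Rightarrow> bool" where
  "dir_le d e \<longleftrightarrow> d = e \<or> d = (1, -1) \<or> e = (-1, 1) \<or>
     (d \<in> V \<and> e \<in> V \<and> fst d * snd e - snd d * fst e \<ge> 0)"

definition dir_less :: "dir \<Rightarrow> dir \<Rightarrow> bool" where
  "dir_less d e \<longleftrightarrow> dir_le d e \<and> d \<noteq> e"

definition val :: "rat \<times> rat \<Rightarrow> dir" where
  "val c = (THE d. d \<in> V \<and> vval d c = 0)"

definition Valsup :: "dir \<Rightarrow> (rat \<times> nat \<Rightarrow> 'k::zero) \<Rightarrow> dir set" where
  "Valsup d P = {val (fst p - fst (en d P), snd p - snd (en d P)) | p.
      p \<in> Supp P \<and> vval (-1, 1) p > vval (-1, 1) (en d P)}"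

definition Valinf :: "dir \<Rightarrow> (rat \<times> nat \<Rightarrow> 'k::zero) \<Rightarrow> dir set" where
  "Valinf d P = {val (fst p - fst (st d P), snd p - snd (st d P)) | p.
      p \<in> Supp P \<and> vval (1, -1) p > vval (1, -1) (st d P)}"

definition Succ :: "dir \<Rightarrow> (rat \<times> nat \<Rightarrow> 'k::zero) \<Rightarrow> dir option" where
  "Succ d P = (if Valsup d P = {} then None
     else Some (THE m. m \<in> Valsup d P \<and> (\<forall>x \<in> Valsup d P. dir_le m x)))"

definition Pred :: "dir \<Rightarrow> (rat \<times> nat \<Rightarrow> 'k::zero) \<Rightarrow> dir option" where
  "Pred d P = (if Valinf d P = {} then None
     else Some (THE m. m \<in> Valinf d P \<and> (\<forall>x \<in> Valinf d P. dir_le x m)))"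

end

theory Submission
  imports Defs
begin


definition ww :: "rat \<times> rat \<Rightarrow> rat" where "ww p = snd p - fst p"
definition GG :: "rat \<Rightarrow> rat \<times> rat \<Rightarrow> rat" where "GG t p = fst p + t * ww p"
definition AA :: "(rat \<times> rat) set \<Rightarrow> rat \<Rightarrow> (rat \<times> rat) set" where
  "AA S t = {p\<in>S. \<forall>q\<in>S. GG t q \<le> GG t p}"
definition RR :: "rat \<times> rat \<Rightarrow> rat \<times> rat \<Rightarrow> rat" where
  "RR q p = - (fst p - fst q) / (ww p - ww q)"

lemma GG_diff: "GG s p - GG s q = (fst p - fst q) + s * (ww p - ww q)"
  by (simp add: GG_def algebra_simps)

lemma pt_eq: "ww p = ww q \<Longrightarrow> fst p = fst q \<Longrightarrow> p = q"
  by (simp add: ww_def prod_eq_iff)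

lemma RR_pos_le: "ww q < ww p \<Longrightarrow> (s \<le> RR q p \<longleftrightarrow> GG s p \<le> GG s q)"
proof -
  assume h: "ww q < ww p"
  have "s \<le> RR q p \<longleftrightarrow> s * (ww p - ww q) \<le> - (fst p - fst q)"
    unfolding RR_def using h by (simp add: pos_le_divide_eq)
  also have "\<dots> \<longleftrightarrow> GG s p - GG s q \<le> 0" by (simp add: GG_diff algebra_simps)
  finally show ?thesis by simp
qed

lemma RR_pos_less: "ww q < ww p \<Longrightarrow> (s < RR q p \<longleftrightarrow> GG s p < GG s q)"
proof -
  assume h: "ww q < ww p"
  have "s < RR q p \<longleftrightarrow> s * (ww p - ww q) < - (fst p - fst q)"
    unfolding RR_def using h by (simp add: pos_less_divide_eq)
  also have "\<dots> \<longleftrightarrow> GG s p - GG s q < 0" by (simp add: GG_diff algebra_simps)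
  finally show ?thesis by simp
qed

lemma RR_neg_le: "ww p < ww q \<Longrightarrow> (RR q p \<le> s \<longleftrightarrow> GG s p \<le> GG s q)"
proof -
  assume h: "ww p < ww q"
  have "RR q p \<le> s \<longleftrightarrow> s * (ww p - ww q) \<le> - (fst p - fst q)"
    unfolding RR_def using h by (simp add: neg_divide_le_eq)
  also have "\<dots> \<longleftrightarrow> GG s p - GG s q \<le> 0" by (simp add: GG_diff algebra_simps)
  finally show ?thesis by simp
qed

lemma RR_neg_less: "ww p < ww q \<Longrightarrow> (RR q p < s \<longleftrightarrow> GG s p < GG s q)"
proof -
  assume h: "ww p < ww q"
  have "RR q p < s \<longleftrightarrow> s * (ww p - ww q) < - (fst p - fst q)"
    unfolding RR_def using h by (simp add: neg_divide_less_eq)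
  also have "\<dots> \<longleftrightarrow> GG s p - GG s q < 0" by (simp add: GG_diff algebra_simps)
  finally show ?thesis by simp
qed

lemma AA_eqG: "p \<in> AA S s \<Longrightarrow> q \<in> AA S s \<Longrightarrow> GG s p = GG s q"
  unfolding AA_def by (auto intro: antisym)

lemma up_gt:
  assumes q: "q \<in> AA S t" and en: "\<forall>p\<in>AA S t. ww p \<le> ww q"
    and p: "p \<in> S" "ww q < ww p"
  shows "t < RR q p"
proof (rule ccontr)
  assume "\<not> t < RR q p"
  hence "RR q p \<le> t" by simp
  hence "GG t q \<le> GG t p" using p RR_pos_less[of q p t] by (auto simp: not_less[symmetric])
  hence "p \<in> AA S t" using q p unfolding AA_def by (auto intro: order_trans)
  thus False using en p by auto
qed

lemma up_in:
  assumes q: "q \<in> AA S t" and "t \<le> s" and R: "\<forall>p\<in>S. ww q < ww p \<longrightarrow> s \<le> RR q p"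
  shows "q \<in> AA S s"
  unfolding AA_def
proof (safe)
  show "q \<in> S" using q by (simp add: AA_def)
  fix p assume p: "p \<in> S"
  show "GG s p \<le> GG s q"
  proof (cases "ww q < ww p")
    case True thus ?thesis using R p RR_pos_le by auto
  next
    case False
    have "GG t p \<le> GG t q" using q p by (simp add: AA_def)
    hence "GG t p - GG t q \<le> 0" by simp
    moreover have "(s - t) * (ww p - ww q) \<le> 0" using False \<open>t \<le> s\<close>
      by (simp add: mult_nonneg_nonpos)
    ultimately have "GG s p - GG s q \<le> 0" by (simp add: GG_diff algebra_simps)
    thus ?thesis by simp
  qed
qed

lemma up_single:
  assumes q: "q \<in> AA S t" and "t < s" and R: "\<forall>p\<in>S. ww q < ww p \<longrightarrow> s < RR q p"
  shows "AA S s = {q}"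
proof -
  have qs: "q \<in> AA S s" using up_in[OF q] assms(2) R by (auto intro: less_imp_le)
  { fix p assume p: "p \<in> AA S s"
    hence pS: "p \<in> S" by (simp add: AA_def)
    have eq: "GG s p = GG s q" using AA_eqG[OF p qs] .
    have "p = q"
    proof (cases "ww q < ww p")
      case True thus ?thesis using R pS RR_pos_less[of q p s] eq by auto
    next
      case False
      have "GG t p \<le> GG t q" using q pS by (simp add: AA_def)
      hence h1: "GG t p - GG t q \<le> 0" by simp
      show ?thesis
      proof (cases "ww p = ww q")
        case True
        hence "fst p - fst q = GG s p - GG s q" by (simp add: GG_diff)
        thus ?thesis using eq True pt_eq by simp
      next
        case F2: False
        with False have "ww p < ww q" by simp
        hence "(s - t) * (ww p - ww q) < 0" using \<open>t < s\<close> by (simp add: mult_pos_neg)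
        hence "GG s p - GG s q < 0" using h1 by (simp add: GG_diff algebra_simps)
        thus ?thesis using eq by simp
      qed
    qed }
  thus ?thesis using qs by blast
qed

lemma up_minw:
  assumes q: "q \<in> AA S t" and "t < s" and qs: "q \<in> AA S s" and p: "p \<in> AA S s"
  shows "ww q \<le> ww p"
proof (rule ccontr)
  assume "\<not> ww q \<le> ww p"
  hence lt: "ww p < ww q" by simp
  have eq: "GG s p = GG s q" using AA_eqG[OF p qs] .
  have "(s - t) * (ww p - ww q) < 0" using lt \<open>t < s\<close> by (simp add: mult_pos_neg)
  moreover have "GG t p - GG t q = (GG s p - GG s q) - (s - t) * (ww p - ww q)"
    by (simp add: GG_def algebra_simps)
  ultimately have "GG t p - GG t q > 0" using eq by linarith
  moreover have "GG t p \<le> GG t q" using q p by (simp add: AA_def)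
  ultimately show False by simp
qed

lemma dn_minw:
  assumes q: "q \<in> AA S t" and "s < t" and qs: "q \<in> AA S s" and p: "p \<in> AA S s"
  shows "ww p \<le> ww q"
proof (rule ccontr)
  assume "\<not> ww p \<le> ww q"
  hence lt: "ww q < ww p" by simp
  have eq: "GG s p = GG s q" using AA_eqG[OF p qs] .
  have "(s - t) * (ww p - ww q) < 0" using lt \<open>s < t\<close> by (simp add: mult_neg_pos)
  moreover have "GG t p - GG t q = (GG s p - GG s q) - (s - t) * (ww p - ww q)"
    by (simp add: GG_def algebra_simps)
  ultimately have "GG t p - GG t q > 0" using eq by linarith
  moreover have "GG t p \<le> GG t q" using q p by (simp add: AA_def)
  ultimately show False by simp
qed

lemma dn_lt:
  assumes q: "q \<in> AA S t" and st: "\<forall>p\<in>AA S t. ww q \<le> ww p"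
    and p: "p \<in> S" "ww p < ww q"
  shows "RR q p < t"
proof (rule ccontr)
  assume "\<not> RR q p < t"
  hence "t \<le> RR q p" by simp
  hence "GG t q \<le> GG t p" using p RR_neg_less[of p q t] by (auto simp: not_less[symmetric])
  hence "p \<in> AA S t" using q p unfolding AA_def by (auto intro: order_trans)
  thus False using st p by auto
qed

lemma dn_in:
  assumes q: "q \<in> AA S t" and "s \<le> t" and R: "\<forall>p\<in>S. ww p < ww q \<longrightarrow> RR q p \<le> s"
  shows "q \<in> AA S s"
  unfolding AA_def
proof (safe)
  show "q \<in> S" using q by (simp add: AA_def)
  fix p assume p: "p \<in> S"
  show "GG s p \<le> GG s q"
  proof (cases "ww p < ww q")
    case True thus ?thesis using R p RR_neg_le by auto
  next
    case False
    have "GG t p \<le> GG t q" using q p by (simp add: AA_def)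
    hence "GG t p - GG t q \<le> 0" by simp
    moreover have "(s - t) * (ww p - ww q) \<le> 0" using False \<open>s \<le> t\<close>
      by (simp add: mult_nonpos_nonneg)
    ultimately have "GG s p - GG s q \<le> 0" by (simp add: GG_diff algebra_simps)
    thus ?thesis by simp
  qed
qed

lemma dn_single:
  assumes q: "q \<in> AA S t" and "s < t" and R: "\<forall>p\<in>S. ww p < ww q \<longrightarrow> RR q p < s"
  shows "AA S s = {q}"
proof -
  have qs: "q \<in> AA S s" using dn_in[OF q] assms(2) R by (auto intro: less_imp_le)
  { fix p assume p: "p \<in> AA S s"
    hence pS: "p \<in> S" by (simp add: AA_def)
    have eq: "GG s p = GG s q" using AA_eqG[OF p qs] .
    have "p = q"
    proof (cases "ww p < ww q")
      case True thus ?thesis using R pS RR_neg_less[of p q s] eq by auto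
    next
      case False
      have "GG t p \<le> GG t q" using q pS by (simp add: AA_def)
      hence h1: "GG t p - GG t q \<le> 0" by simp
      show ?thesis
      proof (cases "ww p = ww q")
        case True
        hence "fst p - fst q = GG s p - GG s q" by (simp add: GG_diff)
        thus ?thesis using eq True pt_eq by simp
      next
        case F2: False
        with False have "ww q < ww p" by simp
        hence "(s - t) * (ww p - ww q) < 0" using \<open>s < t\<close> by (simp add: mult_neg_pos)
        hence "GG s p - GG s q < 0" using h1 by (simp add: GG_diff algebra_simps)
        thus ?thesis using eq by simp
      qed
    qed }
  thus ?thesis using qs by blast
qed

lemma card_gt1I: "finite A \<Longrightarrow> x \<in> A \<Longrightarrow> y \<in> A \<Longrightarrow> x \<noteq> y \<Longrightarrow> 1 < card A"
  using card_le_Suc0_iff_eq[of A] by force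

lemma card_gt1D: "finite A \<Longrightarrow> 1 < card A \<Longrightarrow> \<exists>x\<in>A. \<exists>y\<in>A. x \<noteq> y"
  using card_le_Suc0_iff_eq[of A] by force

lemma AA_sub: "AA S t \<subseteq> S" by (auto simp: AA_def)

lemma up_break:
  assumes fin: "finite S" and q: "q \<in> AA S t" and en: "\<forall>p\<in>AA S t. ww p \<le> ww q"
    and ne: "{p\<in>S. ww q < ww p} \<noteq> {}"
  defines "ts \<equiv> Min (RR q ` {p\<in>S. ww q < ww p})"
  shows "t < ts \<and> 1 < card (AA S ts) \<and> q \<in> AA S ts \<and> (\<forall>p\<in>S. ww q < ww p \<longrightarrow> ts \<le> RR q p)
     \<and> (\<exists>p0\<in>S. ww q < ww p0 \<and> RR q p0 = ts)"
proof -
  let ?U = "{p\<in>S. ww q < ww p}"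
  have finU: "finite ?U" using fin by simp
  have tsin: "ts \<in> RR q ` ?U" unfolding ts_def using finU ne by (intro Min_in) auto
  then obtain p0 where p0: "p0 \<in> S" "ww q < ww p0" "RR q p0 = ts" by auto
  have le: "\<forall>p\<in>S. ww q < ww p \<longrightarrow> ts \<le> RR q p" unfolding ts_def using finU by auto
  have "t < ts" using up_gt[OF q en p0(1,2)] p0(3) by simp
  have qts: "q \<in> AA S ts" using up_in[OF q] \<open>t < ts\<close> le by auto
  have "GG ts p0 \<le> GG ts q" using RR_pos_le[OF p0(2), of ts] p0(3) by simp
  moreover have "\<not> GG ts p0 < GG ts q" using RR_pos_less[OF p0(2), of ts] p0(3) by simp
  ultimately have "GG ts p0 = GG ts q" by simp
  hence "p0 \<in> AA S ts" using qts p0(1) by (auto simp: AA_def)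
  moreover have "p0 \<noteq> q" using p0(2) by auto
  ultimately have "1 < card (AA S ts)"
    using card_gt1I[of "AA S ts"] qts fin AA_sub finite_subset by metis
  thus ?thesis using \<open>t < ts\<close> qts le p0 by blast
qed

lemma up_reach:
  assumes fin: "finite S" and q: "q \<in> AA S t" and en: "\<forall>p\<in>AA S t. ww p \<le> ww q"
    and "t < t1" and bk: "1 < card (AA S t1)"
    and gap: "\<forall>s. t < s \<and> s < t1 \<longrightarrow> \<not> 1 < card (AA S s)"
  shows "{p\<in>S. ww q < ww p} \<noteq> {} \<and> Min (RR q ` {p\<in>S. ww q < ww p}) = t1"
proof -
  let ?U = "{p\<in>S. ww q < ww p}"
  have ne: "?U \<noteq> {}"
  proof
    assume "?U = {}"
    hence "\<forall>p\<in>S. ww q < ww p \<longrightarrow> t1 < RR q p" by auto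
    hence "AA S t1 = {q}" using up_single[OF q \<open>t < t1\<close>] by blast
    thus False using bk by simp
  qed
  define ts where "ts = Min (RR q ` ?U)"
  note B = up_break[OF fin q en ne, folded ts_def]
  have "ts = t1"
  proof (rule ccontr)
    assume "ts \<noteq> t1"
    hence "ts < t1 \<or> t1 < ts" by auto
    thus False
    proof
      assume "ts < t1" thus False using gap B by auto
    next
      assume "t1 < ts"
      hence "AA S t1 = {q}" using up_single[OF q \<open>t < t1\<close>] B by force
      thus False using bk by simp
    qed
  qed
  thus ?thesis using ne ts_def by simp
qed

lemma up_inf:
  assumes fin: "finite S" and q: "q \<in> AA S t" and en: "\<forall>p\<in>AA S t. ww p \<le> ww q"
    and gap: "\<forall>s. t < s \<longrightarrow> \<not> 1 < card (AA S s)"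
  shows "\<forall>p\<in>S. ww p \<le> ww q"
proof (rule ccontr)
  assume "\<not> (\<forall>p\<in>S. ww p \<le> ww q)"
  hence ne: "{p\<in>S. ww q < ww p} \<noteq> {}" by force
  show False using up_break[OF fin q en ne] gap by blast
qed

lemma dn_break:
  assumes fin: "finite S" and q: "q \<in> AA S t" and st: "\<forall>p\<in>AA S t. ww q \<le> ww p"
    and ne: "{p\<in>S. ww p < ww q} \<noteq> {}"
  defines "ts \<equiv> Max (RR q ` {p\<in>S. ww p < ww q})"
  shows "ts < t \<and> 1 < card (AA S ts) \<and> q \<in> AA S ts \<and> (\<forall>p\<in>S. ww p < ww q \<longrightarrow> RR q p \<le> ts)
     \<and> (\<exists>p0\<in>S. ww p0 < ww q \<and> RR q p0 = ts)"
proof -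
  let ?U = "{p\<in>S. ww p < ww q}"
  have finU: "finite ?U" using fin by simp
  have tsin: "ts \<in> RR q ` ?U" unfolding ts_def using finU ne by (intro Max_in) auto
  then obtain p0 where p0: "p0 \<in> S" "ww p0 < ww q" "RR q p0 = ts" by auto
  have le: "\<forall>p\<in>S. ww p < ww q \<longrightarrow> RR q p \<le> ts" unfolding ts_def using finU by auto
  have "ts < t" using dn_lt[OF q st p0(1,2)] p0(3) by simp
  have qts: "q \<in> AA S ts" using dn_in[OF q] \<open>ts < t\<close> le by auto
  have "GG ts p0 \<le> GG ts q" using RR_neg_le[OF p0(2), of ts] p0(3) by simp
  moreover have "\<not> GG ts p0 < GG ts q" using RR_neg_less[OF p0(2), of ts] p0(3) by simp
  ultimately have "GG ts p0 = GG ts q" by simp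
  hence "p0 \<in> AA S ts" using qts p0(1) by (auto simp: AA_def)
  moreover have "p0 \<noteq> q" using p0(2) by auto
  ultimately have "1 < card (AA S ts)"
    using card_gt1I[of "AA S ts"] qts fin AA_sub finite_subset by metis
  thus ?thesis using \<open>ts < t\<close> qts le p0 by blast
qed

lemma dn_reach:
  assumes fin: "finite S" and q: "q \<in> AA S t" and st: "\<forall>p\<in>AA S t. ww q \<le> ww p"
    and "t2 < t" and bk: "1 < card (AA S t2)"
    and gap: "\<forall>s. t2 < s \<and> s < t \<longrightarrow> \<not> 1 < card (AA S s)"
  shows "{p\<in>S. ww p < ww q} \<noteq> {} \<and> Max (RR q ` {p\<in>S. ww p < ww q}) = t2"
proof -
  let ?U = "{p\<in>S. ww p < ww q}"
  have ne: "?U \<noteq> {}"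
  proof
    assume "?U = {}"
    hence "\<forall>p\<in>S. ww p < ww q \<longrightarrow> RR q p < t2" by auto
    hence "AA S t2 = {q}" using dn_single[OF q \<open>t2 < t\<close>] by blast
    thus False using bk by simp
  qed
  define ts where "ts = Max (RR q ` ?U)"
  note B = dn_break[OF fin q st ne, folded ts_def]
  have "ts = t2"
  proof (rule ccontr)
    assume "ts \<noteq> t2"
    hence "t2 < ts \<or> ts < t2" by auto
    thus False
    proof
      assume "t2 < ts" thus False using gap B by auto
    next
      assume "ts < t2"
      hence "AA S t2 = {q}" using dn_single[OF q \<open>t2 < t\<close>] B by force
      thus False using bk by simp
    qed
  qed
  thus ?thesis using ne ts_def by simp
qed

lemma dn_inf:
  assumes fin: "finite S" and q: "q \<in> AA S t" and st: "\<forall>p\<in>AA S t. ww q \<le> ww p"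
    and gap: "\<forall>s. s < t \<longrightarrow> \<not> 1 < card (AA S s)"
  shows "\<forall>p\<in>S. ww q \<le> ww p"
proof (rule ccontr)
  assume "\<not> (\<forall>p\<in>S. ww q \<le> ww p)"
  hence ne: "{p\<in>S. ww p < ww q} \<noteq> {}" by force
  show False using dn_break[OF fin q st ne] gap by blast
qed



definition TT :: "dir \<Rightarrow> rat" where
  "TT d = of_int (snd d) / of_int (fst d + snd d)"

lemma V_pos: "d \<in> V \<Longrightarrow> fst d + snd d > 0"
  by (auto simp: V_def)

lemma vval_T: "d \<in> V \<Longrightarrow> vval d p = of_int (fst d + snd d) * GG (TT d) p"
proof -
  assume d: "d \<in> V"
  have pos: "(of_int (fst d + snd d) :: rat) \<noteq> 0" using V_pos[OF d] by simp
  show ?thesis unfolding vval_def GG_def TT_def ww_def using pos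
    by (simp add: field_simps)
qed

lemma T_le: assumes d: "d \<in> V" and e: "e \<in> V"
  shows "(fst d * snd e - snd d * fst e \<ge> 0) \<longleftrightarrow> TT d \<le> TT e"
proof -
  define md where "md = fst d + snd d"
  define me where "me = fst e + snd e"
  have pd: "md > 0" and pe: "me > 0" using V_pos[OF d] V_pos[OF e] md_def me_def by auto
  have "TT d \<le> TT e \<longleftrightarrow> of_int (snd d) / of_int md \<le> (of_int (snd e) / of_int me :: rat)"
    by (simp add: TT_def md_def me_def)
  also have "\<dots> \<longleftrightarrow> of_int (snd d) * of_int me \<le> (of_int (snd e) * of_int md :: rat)"
    using pd pe by (simp add: divide_le_eq le_divide_eq field_simps)
  also have "\<dots> \<longleftrightarrow> snd d * me \<le> snd e * md"
    by (metis of_int_le_iff of_int_mult)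
  also have "\<dots> \<longleftrightarrow> fst d * snd e - snd d * fst e \<ge> 0"
    by (simp add: md_def me_def algebra_simps)
  finally show ?thesis by simp
qed

lemma T_inj: assumes d: "d \<in> V" and e: "e \<in> V" and eq: "TT d = TT e" shows "d = e"
proof -
  define md where "md = fst d + snd d"
  define me where "me = fst e + snd e"
  have pd: "md > 0" and pe: "me > 0" using V_pos[OF d] V_pos[OF e] md_def me_def by auto
  have "of_int (snd d) * of_int me = (of_int (snd e) * of_int md :: rat)"
    using eq pd pe by (simp add: TT_def md_def me_def field_simps)
  hence E: "snd d * me = snd e * md" by (metis of_int_eq_iff of_int_mult)
  have cd: "coprime (snd d) md"
  proof -
    have "gcd (fst d) (snd d) = 1" using d by (auto simp: V_def)
    hence "gcd (snd d) (fst d + snd d) = 1"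
      by (metis gcd.commute gcd_add2 add.commute)
    thus ?thesis by (simp add: md_def coprime_iff_gcd_eq_1)
  qed
  have ce: "coprime (snd e) me"
  proof -
    have "gcd (fst e) (snd e) = 1" using e by (auto simp: V_def)
    hence "gcd (snd e) (fst e + snd e) = 1"
      by (metis gcd.commute gcd_add2 add.commute)
    thus ?thesis by (simp add: me_def coprime_iff_gcd_eq_1)
  qed
  have "md dvd snd d * me" using E by simp
  hence "md dvd me" using cd by (metis coprime_commute coprime_dvd_mult_right_iff)
  moreover have "me dvd snd e * md" using E by (metis dvd_triv_right)
  hence "me dvd md" using ce by (metis coprime_commute coprime_dvd_mult_right_iff)
  ultimately have "md = me" using pd pe by (simp add: zdvd_antisym_nonneg)
  hence "snd d = snd e" using E pd by simp
  with \<open>md = me\<close> show "d = e" by (simp add: md_def me_def prod_eq_iff)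
qed

lemma T_surj: "\<exists>d\<in>V. TT d = t"
proof -
  obtain n m where q: "quotient_of t = (n, m)" by fastforce
  have m: "m > 0" using quotient_of_denom_pos[OF q] .
  have c: "coprime n m" using quotient_of_coprime[OF q] .
  have t: "t = of_int n / of_int m" using quotient_of_div[OF q] .
  define d where "d = (m - n, n)"
  have "gcd (m - n) n = 1"
  proof -
    have "gcd n m = 1" using c by simp
    thus ?thesis by (metis gcd.commute gcd_diff2 gcd_add2 diff_add_cancel)
  qed
  hence "d \<in> V" using m by (simp add: d_def V_def)
  moreover have "TT d = t" using t by (simp add: TT_def d_def)
  ultimately show ?thesis by blast
qed

lemma notV1: "(1, -1) \<notin> V" and notV2: "(-1, 1) \<notin> V"
  by (auto simp: V_def)

lemma dir_le_V: "d \<in> V \<Longrightarrow> e \<in> V \<Longrightarrow> dir_le d e \<longleftrightarrow> TT d \<le> TT e"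
  unfolding dir_le_def using T_le notV1 notV2 by (metis order_refl)

lemma dir_less_V: "d \<in> V \<Longrightarrow> e \<in> V \<Longrightarrow> dir_less d e \<longleftrightarrow> TT d < TT e"
  unfolding dir_less_def using dir_le_V T_inj by (metis order_less_le)

lemma dir_less_bot: "e \<in> V \<Longrightarrow> dir_less (1, -1) e"
  unfolding dir_less_def dir_le_def using notV1 by auto

lemma dir_less_top: "e \<in> V \<Longrightarrow> dir_less e (-1, 1)"
  unfolding dir_less_def dir_le_def using notV2 by auto

lemma val_eq:
  assumes "fst c \<noteq> snd c"
  shows "val c \<in> V \<and> TT (val c) = - fst c / (snd c - fst c)"
proof -
  define t0 where "t0 = - fst c / (snd c - fst c)"
  have nz: "snd c - fst c \<noteq> 0" using assms by simp
  obtain d where d: "d \<in> V" "TT d = t0" using T_surj by blast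
  have "t0 * (snd c - fst c) = - fst c" using nz unfolding t0_def by simp
  hence G0: "GG t0 c = 0" by (simp add: GG_def ww_def)
  have "vval d c = 0" using vval_T[OF d(1)] d(2) G0 by simp
  moreover have "e = d" if "e \<in> V" "vval e c = 0" for e
  proof -
    have "of_int (fst e + snd e) * GG (TT e) c = 0" using vval_T[OF that(1)] that(2) by simp
    hence "GG (TT e) c = 0" using V_pos[OF that(1)] by simp
    hence h: "fst c + TT e * (snd c - fst c) = 0" by (simp add: GG_def ww_def)
    have "TT e * (snd c - fst c) = - fst c" using h by linarith
    hence "TT e = - fst c / (snd c - fst c)" using nz by (simp add: field_simps)
    hence "TT e = t0" unfolding t0_def .
    thus ?thesis using T_inj[OF that(1) d(1)] d(2) by simp
  qed
  ultimately have "val c = d" unfolding val_def using d(1) by (intro the_equality) blast+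
  thus ?thesis using d t0_def by simp
qed

lemma max_char:
  assumes "finite S" "S \<noteq> {}"
  shows "(p \<in> S \<and> f p = Max (f ` S)) \<longleftrightarrow> (p \<in> S \<and> (\<forall>q\<in>S. f q \<le> (f p :: rat)))"
proof
  assume h: "p \<in> S \<and> f p = Max (f ` S)"
  thus "p \<in> S \<and> (\<forall>q\<in>S. f q \<le> f p)" using assms by auto
next
  assume h: "p \<in> S \<and> (\<forall>q\<in>S. f q \<le> f p)"
  have "Max (f ` S) = f p" using assms h by (intro Max_eqI) auto
  thus "p \<in> S \<and> f p = Max (f ` S)" using h by simp
qed

lemma Supp_fin: "in_W l P \<Longrightarrow> finite (Supp P)"
proof -
  assume "in_W l P"
  hence f: "finite {e. P e \<noteq> 0}" by (simp add: in_W_def)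
  have "Supp P = (\<lambda>e. (fst e, of_nat (snd e))) ` {e. P e \<noteq> 0}"
    by (force simp: Supp_def)
  thus ?thesis using f by simp
qed

lemma Supp_ne: "P \<noteq> (\<lambda>_. 0) \<Longrightarrow> Supp P \<noteq> {}"
proof -
  assume "P \<noteq> (\<lambda>_. 0)"
  then obtain a j where "P (a, j) \<noteq> 0" by fastforce
  thus ?thesis by (auto simp: Supp_def)
qed

lemma lSupp_V:
  assumes "finite (Supp P)" "Supp P \<noteq> {}" "d \<in> V"
  shows "lSupp d P = AA (Supp P) (TT d)"
proof -
  have pos: "(of_int (fst d + snd d) :: rat) > 0" using V_pos[OF assms(3)] by simp
  have "lSupp d P = {p. p \<in> Supp P \<and> (\<forall>q\<in>Supp P. vval d q \<le> vval d p)}"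
    unfolding lSupp_def vP_def using max_char[OF assms(1,2), of _ "vval d"] by blast
  also have "\<dots> = AA (Supp P) (TT d)"
    unfolding AA_def using vval_T[OF assms(3)] pos by (simp add: mult_le_cancel_left_pos)
  finally show ?thesis .
qed

lemma lSupp_top:
  assumes "finite (Supp P)" "Supp P \<noteq> {}"
  shows "lSupp (-1, 1) P = {p\<in>Supp P. \<forall>q\<in>Supp P. ww q \<le> ww p}"
proof -
  have v: "vval (-1, 1) x = ww x" for x by (simp add: vval_def ww_def)
  show ?thesis
    unfolding lSupp_def vP_def using max_char[OF assms(1,2), of _ "vval (-1,1)"] by (simp add: v)
qed

lemma lSupp_bot:
  assumes "finite (Supp P)" "Supp P \<noteq> {}"
  shows "lSupp (1, -1) P = {p\<in>Supp P. \<forall>q\<in>Supp P. ww p \<le> ww q}"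
proof -
  have v: "vval (1, -1) x = - ww x" for x by (simp add: vval_def ww_def)
  show ?thesis
    unfolding lSupp_def vP_def using max_char[OF assms(1,2), of _ "vval (1,-1)"] by (simp add: v)
qed

lemma st_eq:
  assumes "q \<in> lSupp d P" "\<forall>p\<in>lSupp d P. ww q \<le> ww p \<and> (ww p = ww q \<longrightarrow> fst p \<le> fst q)"
  shows "st d P = q"
  unfolding st_def
proof (rule the_equality)
  show "q \<in> lSupp d P \<and> (\<forall>x\<in>lSupp d P. fst x - snd x \<le> fst q - snd q \<and>
      (fst x - snd x = fst q - snd q \<longrightarrow> fst x \<le> fst q))"
    using assms by (auto simp: ww_def)
next
  fix p assume p: "p \<in> lSupp d P \<and> (\<forall>x\<in>lSupp d P. fst x - snd x \<le> fst p - snd p \<and>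
      (fst x - snd x = fst p - snd p \<longrightarrow> fst x \<le> fst p))"
  have a: "ww q \<le> ww p \<and> (ww p = ww q \<longrightarrow> fst p \<le> fst q)" using assms(2) p by blast
  have b: "fst q - snd q \<le> fst p - snd p \<and> (fst q - snd q = fst p - snd p \<longrightarrow> fst q \<le> fst p)"
    using assms(1) p by blast
  have "ww p = ww q" using a b by (simp add: ww_def)
  moreover have "fst p = fst q"
  proof -
    have e: "snd p - fst p = snd q - fst q" using \<open>ww p = ww q\<close> by (simp add: ww_def)
    have e1: "fst q - snd q = fst p - snd p" using e by linarith
    have "fst p \<le> fst q" using a \<open>ww p = ww q\<close> by blast
    moreover have "fst q \<le> fst p" using b e1 by blast
    ultimately show ?thesis by simp
  qed
  ultimately show "p = q" by (rule pt_eq)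
qed

lemma en_eq:
  assumes "q \<in> lSupp d P" "\<forall>p\<in>lSupp d P. ww p \<le> ww q \<and> (ww p = ww q \<longrightarrow> fst p \<le> fst q)"
  shows "en d P = q"
  unfolding en_def
proof (rule the_equality)
  show "q \<in> lSupp d P \<and> (\<forall>x\<in>lSupp d P. snd x - fst x \<le> snd q - fst q \<and>
      (snd x - fst x = snd q - fst q \<longrightarrow> snd x \<le> snd q))"
    using assms by (auto simp: ww_def)
next
  fix p assume p: "p \<in> lSupp d P \<and> (\<forall>x\<in>lSupp d P. snd x - fst x \<le> snd p - fst p \<and>
      (snd x - fst x = snd p - fst p \<longrightarrow> snd x \<le> snd p))"
  have a: "ww p \<le> ww q \<and> (ww p = ww q \<longrightarrow> fst p \<le> fst q)" using assms(2) p by blast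
  have b: "snd q - fst q \<le> snd p - fst p \<and> (snd q - fst q = snd p - fst p \<longrightarrow> snd q \<le> snd p)"
    using assms(1) p by blast
  have "ww p = ww q" using a b by (simp add: ww_def)
  moreover have "fst p = fst q"
  proof -
    have e: "snd q - fst q = snd p - fst p" using \<open>ww p = ww q\<close> by (simp add: ww_def)
    have "fst p \<le> fst q" using a \<open>ww p = ww q\<close> by blast
    moreover have "snd q \<le> snd p" using b e by blast
    ultimately show ?thesis using e by linarith
  qed
  ultimately show "p = q" by (rule pt_eq)
qed

lemma tie_AA: "p \<in> AA S s \<Longrightarrow> q \<in> AA S s \<Longrightarrow> ww p = ww q \<Longrightarrow> p = q"
  using AA_eqG[of p S s q] pt_eq by (simp add: GG_def)

lemma st_from_AA:
  assumes "lSupp d P = AA S s" "q \<in> AA S s" "\<forall>p\<in>AA S s. ww q \<le> ww p"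
  shows "st d P = q"
  using assms by (intro st_eq) (auto dest: tie_AA)

lemma en_from_AA:
  assumes "lSupp d P = AA S s" "q \<in> AA S s" "\<forall>p\<in>AA S s. ww p \<le> ww q"
  shows "en d P = q"
  using assms by (intro en_eq) (auto dest: tie_AA)

lemma AA_ne: "finite S \<Longrightarrow> S \<noteq> {} \<Longrightarrow> AA S s \<noteq> {}"
proof -
  assume f: "finite S" "S \<noteq> {}"
  have "Max (GG s ` S) \<in> GG s ` S" using f by (intro Max_in) auto
  then obtain p where p: "p \<in> S" "GG s p = Max (GG s ` S)" by auto
  have "\<forall>q\<in>S. GG s q \<le> GG s p" using p f by auto
  thus ?thesis using p unfolding AA_def by blast
qed

lemma exists_maxw: "finite A \<Longrightarrow> A \<noteq> {} \<Longrightarrow> \<exists>q\<in>A. \<forall>p\<in>A. ww p \<le> ww q"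
proof -
  assume f: "finite A" "A \<noteq> {}"
  have "Max (ww ` A) \<in> ww ` A" using f by (intro Max_in) auto
  then obtain q where q: "q \<in> A" "ww q = Max (ww ` A)" by auto
  have "\<forall>p\<in>A. ww p \<le> ww q" using q f by auto
  thus ?thesis using q by blast
qed

lemma exists_minw: "finite A \<Longrightarrow> A \<noteq> {} \<Longrightarrow> \<exists>q\<in>A. \<forall>p\<in>A. ww q \<le> ww p"
proof -
  assume f: "finite A" "A \<noteq> {}"
  have "Min (ww ` A) \<in> ww ` A" using f by (intro Min_in) auto
  then obtain q where q: "q \<in> A" "ww q = Min (ww ` A)" by auto
  have "\<forall>p\<in>A. ww q \<le> ww p" using q f by auto
  thus ?thesis using q by blast
qed



lemma vtop: "vval (-1, 1) x = ww x" by (simp add: vval_def ww_def)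
lemma vbot: "vval (1, -1) x = - ww x" by (simp add: vval_def ww_def)

lemma val_pq:
  assumes "ww p \<noteq> ww q"
  shows "val (fst p - fst q, snd p - snd q) \<in> V \<and> TT (val (fst p - fst q, snd p - snd q)) = RR q p"
proof -
  have ne: "fst p - fst q \<noteq> snd p - snd q" using assms by (auto simp: ww_def)
  have "snd p - snd q - (fst p - fst q) = ww p - ww q" by (simp add: ww_def)
  thus ?thesis using val_eq[of "(fst p - fst q, snd p - snd q)"] ne by (simp add: RR_def)
qed

lemma succ_lemma:
  assumes VS: "Valsup d P = (\<lambda>p. val (c p)) ` U" and ne: "U \<noteq> {}" and fin: "finite U"
    and vp: "\<forall>p\<in>U. val (c p) \<in> V \<and> TT (val (c p)) = R p"
    and mn: "Min (R ` U) = TT d1" and d1: "d1 \<in> V"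
  shows "Succ d P = Some d1"
proof -
  have vne: "Valsup d P \<noteq> {}" using VS ne by simp
  have "Min (R ` U) \<in> R ` U" using fin ne by (intro Min_in) auto
  then obtain p0 where p0: "p0 \<in> U" "R p0 = TT d1" using mn by auto
  have "val (c p0) = d1" using vp p0 T_inj[OF _ d1] by auto
  hence d1in: "d1 \<in> Valsup d P" using VS p0 by auto
  have allge: "\<forall>x\<in>Valsup d P. dir_le d1 x"
  proof
    fix x assume "x \<in> Valsup d P"
    then obtain p where p: "p \<in> U" "x = val (c p)" using VS by auto
    have "Min (R ` U) \<le> R p" using fin p(1) by auto
    thus "dir_le d1 x" using vp p dir_le_V[OF d1] mn by auto
  qed
  have VV: "Valsup d P \<subseteq> V" using VS vp by auto
  have "(THE m. m \<in> Valsup d P \<and> (\<forall>x\<in>Valsup d P. dir_le m x)) = d1"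
  proof (rule the_equality)
    show "d1 \<in> Valsup d P \<and> (\<forall>x\<in>Valsup d P. dir_le d1 x)" using d1in allge by blast
  next
    fix m assume m: "m \<in> Valsup d P \<and> (\<forall>x\<in>Valsup d P. dir_le m x)"
    hence mV: "m \<in> V" using VV by auto
    have "TT m \<le> TT d1" using m d1in dir_le_V[OF mV d1] by auto
    moreover have "TT d1 \<le> TT m" using m allge dir_le_V[OF d1 mV] by auto
    ultimately show "m = d1" using T_inj[OF mV d1] by simp
  qed
  thus ?thesis using vne by (simp add: Succ_def)
qed

lemma pred_lemma:
  assumes VS: "Valinf d P = (\<lambda>p. val (c p)) ` U" and ne: "U \<noteq> {}" and fin: "finite U"
    and vp: "\<forall>p\<in>U. val (c p) \<in> V \<and> TT (val (c p)) = R p"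
    and mx: "Max (R ` U) = TT d2" and d2: "d2 \<in> V"
  shows "Pred d P = Some d2"
proof -
  have vne: "Valinf d P \<noteq> {}" using VS ne by simp
  have "Max (R ` U) \<in> R ` U" using fin ne by (intro Max_in) auto
  then obtain p0 where p0: "p0 \<in> U" "R p0 = TT d2" using mx by auto
  have "val (c p0) = d2" using vp p0 T_inj[OF _ d2] by auto
  hence d2in: "d2 \<in> Valinf d P" using VS p0 by auto
  have allle: "\<forall>x\<in>Valinf d P. dir_le x d2"
  proof
    fix x assume "x \<in> Valinf d P"
    then obtain p where p: "p \<in> U" "x = val (c p)" using VS by auto
    have "R p \<le> Max (R ` U)" using fin p(1) by auto
    thus "dir_le x d2" using vp p dir_le_V[OF _ d2] mx by auto
  qed
  have VV: "Valinf d P \<subseteq> V" using VS vp by auto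
  have "(THE m. m \<in> Valinf d P \<and> (\<forall>x\<in>Valinf d P. dir_le x m)) = d2"
  proof (rule the_equality)
    show "d2 \<in> Valinf d P \<and> (\<forall>x\<in>Valinf d P. dir_le x d2)" using d2in allle by blast
  next
    fix m assume m: "m \<in> Valinf d P \<and> (\<forall>x\<in>Valinf d P. dir_le x m)"
    hence mV: "m \<in> V" using VV by auto
    have "TT d2 \<le> TT m" using m d2in dir_le_V[OF d2 mV] by auto
    moreover have "TT m \<le> TT d2" using m allle dir_le_V[OF mV d2] by auto
    ultimately show "m = d2" using T_inj[OF mV d2] by simp
  qed
  thus ?thesis using vne by (simp add: Pred_def)
qed

theorem proposition2p23:
  fixes l :: nat and P :: "rat \<times> nat \<Rightarrow> 'k::field_char_0"
    and d1 d2 d :: dir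
  assumes "l \<ge> 1"
    and "in_W l P" and "P \<noteq> (\<lambda>_. 0)"
    and "d1 \<in> Valbar P" and "d2 \<in> Valbar P" and "dir_less d2 d1"
    and "\<not> (\<exists>e \<in> Valbar P. dir_less d2 e \<and> dir_less e d1)"
    and "d \<in> V"
  shows "(d1 \<in> Val P \<and> dir_less d d1 \<and> dir_le d2 d \<longrightarrow> Succ d P = Some d1)
       \<and> (d2 \<in> Val P \<and> dir_le d d1 \<and> dir_less d2 d \<longrightarrow> Pred d P = Some d2)
       \<and> (dir_less d d1 \<and> dir_less d2 d \<longrightarrow>
            {st d1 P} = lSupp d P \<and> lSupp d P = {en d2 P})"
proof -
  let ?S = "Supp P"
  have fin: "finite ?S" using Supp_fin assms(2) by blast
  have ne: "?S \<noteq> {}" using Supp_ne assms(3) by blast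
  have ValV: "Val P \<subseteq> V" by (auto simp: Val_def)
  have d1nb: "d1 \<noteq> (1, -1)" using assms(6) notV1 by (auto simp: dir_less_def dir_le_def)
  have d2nt: "d2 \<noteq> (-1, 1)" using assms(6) notV2 by (auto simp: dir_less_def dir_le_def)
  have d1c: "d1 = (-1, 1) \<or> d1 \<in> Val P" using assms(4) d1nb by (auto simp: Valbar_def)
  have d2c: "d2 = (1, -1) \<or> d2 \<in> Val P" using assms(5) d2nt by (auto simp: Valbar_def)
  have Val_iff: "\<And>e. e \<in> V \<Longrightarrow> e \<in> Val P \<longleftrightarrow> 1 < card (AA ?S (TT e))"
    using lSupp_V[OF fin ne] by (auto simp: Val_def)
  define lo where "lo s \<longleftrightarrow> d2 = (1, -1) \<or> (d2 \<in> V \<and> TT d2 < s)" for s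
  define hi where "hi s \<longleftrightarrow> d1 = (-1, 1) \<or> (d1 \<in> V \<and> s < TT d1)" for s
  have gap: "\<not> 1 < card (AA ?S s)" if ls: "lo s" and hs: "hi s" for s
  proof
    assume c: "1 < card (AA ?S s)"
    obtain e where e: "e \<in> V" "TT e = s" using T_surj by blast
    have eVal: "e \<in> Val P" using Val_iff[OF e(1)] e(2) c by simp
    have l2: "dir_less d2 e"
    proof (cases "d2 = (1, -1)")
      case True thus ?thesis using dir_less_bot[OF e(1)] by simp
    next
      case False
      hence "d2 \<in> V \<and> TT d2 < s" using ls unfolding lo_def by simp
      thus ?thesis using dir_less_V[of d2 e] e by simp
    qed
    have l1: "dir_less e d1"
    proof (cases "d1 = (-1, 1)")
      case True thus ?thesis using dir_less_top[OF e(1)] by simp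
    next
      case False
      hence "d1 \<in> V \<and> s < TT d1" using hs unfolding hi_def by simp
      thus ?thesis using dir_less_V[of e d1] e by simp
    qed
    show False using assms(7) eVal l1 l2 by (auto simp: Valbar_def)
  qed
  have dV: "d \<in> V" by fact
  define t where "t = TT d"
  have finA: "finite (AA ?S s)" for s using fin AA_sub finite_subset by metis
  have neA: "AA ?S s \<noteq> {}" for s using AA_ne fin ne by blast
  have lSd: "lSupp d P = AA ?S t" using lSupp_V[OF fin ne dV] t_def by simp
  have P1: "d1 \<in> Val P \<and> dir_less d d1 \<and> dir_le d2 d \<longrightarrow> Succ d P = Some d1"
  proof (intro impI, elim conjE)
    assume d1Val: "d1 \<in> Val P" and dd1: "dir_less d d1" and d2d: "dir_le d2 d"
    have d1V: "d1 \<in> V" using d1Val ValV by auto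
    have tt1: "t < TT d1" using dir_less_V[OF dV d1V] dd1 t_def by simp
    have bk: "1 < card (AA ?S (TT d1))" using Val_iff[OF d1V] d1Val by simp
    have gap1: "\<forall>s. t < s \<and> s < TT d1 \<longrightarrow> \<not> 1 < card (AA ?S s)"
    proof (intro allI impI)
      fix s assume s: "t < s \<and> s < TT d1"
      have "lo s"
      proof (cases "d2 = (1, -1)")
        case True thus ?thesis by (simp add: lo_def)
      next
        case False
        hence d2V: "d2 \<in> V" using d2c ValV by auto
        have "TT d2 \<le> t" using dir_le_V[OF d2V dV] d2d t_def by simp
        thus ?thesis using s d2V by (simp add: lo_def)
      qed
      moreover have "hi s" using s d1V by (simp add: hi_def)
      ultimately show "\<not> 1 < card (AA ?S s)" using gap by blast
    qed
    obtain q where q: "q \<in> AA ?S t" "\<forall>p\<in>AA ?S t. ww p \<le> ww q"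
      using exists_maxw[OF finA neA] by blast
    have enq: "en d P = q" using en_from_AA[OF lSd q] .
    have R: "{p\<in>?S. ww q < ww p} \<noteq> {} \<and> Min (RR q ` {p\<in>?S. ww q < ww p}) = TT d1"
      using up_reach[OF fin q tt1 bk gap1] .
    have VS: "Valsup d P = (\<lambda>p. val (fst p - fst q, snd p - snd q)) ` {p\<in>?S. ww q < ww p}"
      unfolding Valsup_def enq vtop image_def by blast
    show "Succ d P = Some d1"
      apply (rule succ_lemma[OF VS _ _ _ _ d1V, where R = "RR q"])
      using R fin val_pq by auto
  qed
  have P2: "d2 \<in> Val P \<and> dir_le d d1 \<and> dir_less d2 d \<longrightarrow> Pred d P = Some d2"
  proof (intro impI, elim conjE)
    assume d2Val: "d2 \<in> Val P" and dd1: "dir_le d d1" and d2d: "dir_less d2 d"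
    have d2V: "d2 \<in> V" using d2Val ValV by auto
    have tt2: "TT d2 < t" using dir_less_V[OF d2V dV] d2d t_def by simp
    have bk: "1 < card (AA ?S (TT d2))" using Val_iff[OF d2V] d2Val by simp
    have gap2: "\<forall>s. TT d2 < s \<and> s < t \<longrightarrow> \<not> 1 < card (AA ?S s)"
    proof (intro allI impI)
      fix s assume s: "TT d2 < s \<and> s < t"
      have "hi s"
      proof (cases "d1 = (-1, 1)")
        case True thus ?thesis by (simp add: hi_def)
      next
        case False
        hence d1V: "d1 \<in> V" using d1c ValV by auto
        have "t \<le> TT d1" using dir_le_V[OF dV d1V] dd1 t_def by simp
        thus ?thesis using s d1V by (simp add: hi_def)
      qed
      moreover have "lo s" using s d2V by (simp add: lo_def)
      ultimately show "\<not> 1 < card (AA ?S s)" using gap by blast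
    qed
    obtain q where q: "q \<in> AA ?S t" "\<forall>p\<in>AA ?S t. ww q \<le> ww p"
      using exists_minw[OF finA neA] by blast
    have stq: "st d P = q" using st_from_AA[OF lSd q] .
    have R: "{p\<in>?S. ww p < ww q} \<noteq> {} \<and> Max (RR q ` {p\<in>?S. ww p < ww q}) = TT d2"
      using dn_reach[OF fin q tt2 bk gap2] .
    have VS: "Valinf d P = (\<lambda>p. val (fst p - fst q, snd p - snd q)) ` {p\<in>?S. ww p < ww q}"
      unfolding Valinf_def stq vbot image_def by force
    show "Pred d P = Some d2"
      apply (rule pred_lemma[OF VS _ _ _ _ d2V, where R = "RR q"])
      using R fin val_pq by auto
  qed
  have P3: "dir_less d d1 \<and> dir_less d2 d \<longrightarrow> {st d1 P} = lSupp d P \<and> lSupp d P = {en d2 P}"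
  proof (intro impI, elim conjE)
    assume dd1: "dir_less d d1" and d2d: "dir_less d2 d"
    have lot: "lo t"
    proof (cases "d2 = (1, -1)")
      case True thus ?thesis by (simp add: lo_def)
    next
      case False
      hence d2V: "d2 \<in> V" using d2c ValV by auto
      thus ?thesis using dir_less_V[OF d2V dV] d2d t_def by (simp add: lo_def)
    qed
    have hit: "hi t"
    proof (cases "d1 = (-1, 1)")
      case True thus ?thesis by (simp add: hi_def)
    next
      case False
      hence d1V: "d1 \<in> V" using d1c ValV by auto
      thus ?thesis using dir_less_V[OF dV d1V] dd1 t_def by (simp add: hi_def)
    qed
    have lo_up: "lo s" if "t \<le> s" for s using lot that by (auto simp: lo_def)
    have hi_dn: "hi s" if "s \<le> t" for s using hit that by (auto simp: hi_def)
    have "\<not> 1 < card (AA ?S t)" using gap lot hit by blast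
    then obtain q where Aq: "AA ?S t = {q}"
      using neA[of t] finA[of t] card_le_Suc0_iff_eq[of "AA ?S t"] by (metis One_nat_def not_less ex_in_conv insertI1 subsetI subset_singletonD) 
    have q: "q \<in> AA ?S t" using Aq by simp
    have qmax: "\<forall>p\<in>AA ?S t. ww p \<le> ww q" and qmin: "\<forall>p\<in>AA ?S t. ww q \<le> ww p" using Aq by auto
    have st1: "st d1 P = q"
    proof (cases "d1 = (-1, 1)")
      case True
      have g: "\<forall>s. t < s \<longrightarrow> \<not> 1 < card (AA ?S s)"
        using gap lo_up True by (auto simp: hi_def)
      have all: "\<forall>p\<in>?S. ww p \<le> ww q" using up_inf[OF fin q qmax g] .
      have L: "lSupp d1 P = {p\<in>?S. \<forall>x\<in>?S. ww x \<le> ww p}" using lSupp_top[OF fin ne] True by simp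
      have qS: "q \<in> ?S" using q AA_sub by blast
      show ?thesis
      proof (rule st_eq)
        show "q \<in> lSupp d1 P" using L qS all by simp
        show "\<forall>p\<in>lSupp d1 P. ww q \<le> ww p \<and> (ww p = ww q \<longrightarrow> fst p \<le> fst q)"
        proof
          fix p assume "p \<in> lSupp d1 P"
          hence p: "p \<in> ?S" "ww q \<le> ww p" using L qS by auto
          hence e: "ww p = ww q" using all by (simp add: antisym)
          have "GG t p \<le> GG t q" using q p(1) by (simp add: AA_def)
          hence "fst p \<le> fst q" using e by (simp add: GG_def)
          thus "ww q \<le> ww p \<and> (ww p = ww q \<longrightarrow> fst p \<le> fst q)" using p by simp
        qed
      qed
    next
      case False
      hence d1Val: "d1 \<in> Val P" using d1c by simp
      have d1V: "d1 \<in> V" using d1Val ValV by auto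
      have tt1: "t < TT d1" using dir_less_V[OF dV d1V] dd1 t_def by simp
      have bk: "1 < card (AA ?S (TT d1))" using Val_iff[OF d1V] d1Val by simp
      have gap1: "\<forall>s. t < s \<and> s < TT d1 \<longrightarrow> \<not> 1 < card (AA ?S s)"
        using gap lo_up d1V by (auto simp: hi_def)
      have R: "{p\<in>?S. ww q < ww p} \<noteq> {} \<and> Min (RR q ` {p\<in>?S. ww q < ww p}) = TT d1"
        using up_reach[OF fin q qmax tt1 bk gap1] .
      have qt1: "q \<in> AA ?S (TT d1)" using up_break[OF fin q qmax] R by auto
      have mw: "\<forall>p\<in>AA ?S (TT d1). ww q \<le> ww p" using up_minw[OF q tt1 qt1] by blast
      show ?thesis using st_from_AA[OF lSupp_V[OF fin ne d1V] qt1 mw] .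
    qed
    have en2: "en d2 P = q"
    proof (cases "d2 = (1, -1)")
      case True
      have g: "\<forall>s. s < t \<longrightarrow> \<not> 1 < card (AA ?S s)"
        using gap hi_dn True by (auto simp: lo_def)
      have all: "\<forall>p\<in>?S. ww q \<le> ww p" using dn_inf[OF fin q qmin g] .
      have L: "lSupp d2 P = {p\<in>?S. \<forall>x\<in>?S. ww p \<le> ww x}" using lSupp_bot[OF fin ne] True by simp
      have qS: "q \<in> ?S" using q AA_sub by blast
      show ?thesis
      proof (rule en_eq)
        show "q \<in> lSupp d2 P" using L qS all by simp
        show "\<forall>p\<in>lSupp d2 P. ww p \<le> ww q \<and> (ww p = ww q \<longrightarrow> fst p \<le> fst q)"
        proof
          fix p assume "p \<in> lSupp d2 P"
          hence p: "p \<in> ?S" "ww p \<le> ww q" using L qS by auto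
          hence e: "ww p = ww q" using all by (simp add: antisym)
          have "GG t p \<le> GG t q" using q p(1) by (simp add: AA_def)
          hence "fst p \<le> fst q" using e by (simp add: GG_def)
          thus "ww p \<le> ww q \<and> (ww p = ww q \<longrightarrow> fst p \<le> fst q)" using p by simp
        qed
      qed
    next
      case False
      hence d2Val: "d2 \<in> Val P" using d2c by simp
      have d2V: "d2 \<in> V" using d2Val ValV by auto
      have tt2: "TT d2 < t" using dir_less_V[OF d2V dV] d2d t_def by simp
      have bk: "1 < card (AA ?S (TT d2))" using Val_iff[OF d2V] d2Val by simp
      have gap2: "\<forall>s. TT d2 < s \<and> s < t \<longrightarrow> \<not> 1 < card (AA ?S s)"
        using gap hi_dn d2V by (auto simp: lo_def)
      have R: "{p\<in>?S. ww p < ww q} \<noteq> {} \<and> Max (RR q ` {p\<in>?S. ww p < ww q}) = TT d2"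
        using dn_reach[OF fin q qmin tt2 bk gap2] .
      have qt2: "q \<in> AA ?S (TT d2)" using dn_break[OF fin q qmin] R by auto
      have mw: "\<forall>p\<in>AA ?S (TT d2). ww p \<le> ww q" using dn_minw[OF q tt2 qt2] by blast
      show ?thesis using en_from_AA[OF lSupp_V[OF fin ne d2V] qt2 mw] .
    qed
    show "{st d1 P} = lSupp d P \<and> lSupp d P = {en d2 P}" using st1 en2 lSd Aq by simp
  qed
  show ?thesis using P1 P2 P3 by blast
qed

end
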